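(* Let $(X_n)_{n\ge0}$ be a Markov chain on a measurable space $E$ with Markov transitions $M(x,dy)$, starting at $X_0=x$, and let $H$ be a positive measurable function on $E$. Assume there exist a positive measurable function $h$ on $E$ (with $0<M(1/h)<\infty$) and parameters $\epsilon_h\in]0,1[$, $\kappa_h\in]0,\infty[$ such that for all $x,y\in E$, $$H^h(x):=H(x)\,h(x)\,M(1/h)(x)\le1-\epsilon_h\quad\text{and}\quad M(1/h)(x)\le\kappa_h\,M(1/h)(y).$$ Let $X^{1/h}_n$ be the Markov chain with transitions $M^{1/h}(x,dy):=M(x,dy)\frac{h^{-1}(y)}{M(h^{-1})(x)}$. Then for any $n\ge1$ and any bounded measurable $F$ on $E^n$, $$\mathbb E\Big(F(X_1,\dots,X_n)\prod_{1\le k\le n}H(X_k)\,\Big|\,X_0=x\Big)=\mathbb E\Big(F(X^{1/h}_1,\dots,X^{1/h}_n)\frac{M(h^{-1})(X^{1/h}_0)}{M(h^{-1})(X^{1/h}_n)}\prod_{1\le k\le n}H^h(X^{1/h}_k)\,\Big|\,X^{1/h}_0=x\Big).$$ Moreover, $$\sup_x\mathbb E\Big(\prod_{1\le k\le n}H(X_k)\,\Big|\,X_0=x\Big)\le\kappa_h(1-\epsilon_h)^n.$$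
   Context: $M(f)(x):=\int M(x,dy)f(y)$ and $h^{-1}:=1/h$. *)

theory Defs
  imports "HOL-Probability.Probability"
begin

definition kapply :: "('a \<Rightarrow> 'a measure) \<Rightarrow> ('a \<Rightarrow> real) \<Rightarrow> 'a \<Rightarrow> real" where
  "kapply M f x = (\<integral>y. f y \<partial>M x)"

definition twisted_kernel :: "('a \<Rightarrow> 'a measure) \<Rightarrow> ('a \<Rightarrow> real) \<Rightarrow> 'a \<Rightarrow> 'a measure" where
  "twisted_kernel M h x = density (M x) (\<lambda>y. ennreal ((1 / h y) / kapply M (\<lambda>z. 1 / h z) x))"

text \<open>Law of the path (X_0,...,X_n) of the Markov chain with kernel K on E started at X_0 = x,
  as a measure on the extensional functions {0..n} -> E.\<close>
fun chain_path :: "'a measure \<Rightarrow> ('a \<Rightarrow> 'a measure) \<Rightarrow> nat \<Rightarrow> 'a \<Rightarrow> (nat \<Rightarrow> 'a) measure" where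
  "chain_path E K 0 x = return (PiM {0} (\<lambda>_. E)) (\<lambda>i. if i = 0 then x else undefined)"
| "chain_path E K (Suc n) x =
     chain_path E K n x \<bind> (\<lambda>\<omega>. K (\<omega> n) \<bind>
        (\<lambda>y. return (PiM {0..Suc n} (\<lambda>_. E)) (fun_upd \<omega> (Suc n) y)))"

end

theory Submission
  imports Defs
begin


lemma step_meas:
  assumes K: "K \<in> E \<rightarrow>\<^sub>M prob_algebra E"
  shows "(\<lambda>\<omega>. K (\<omega> n) \<bind> (\<lambda>y. return (PiM {0..Suc n} (\<lambda>_. E)) (fun_upd \<omega> (Suc n) y)))
     \<in> PiM {0..n} (\<lambda>_. E) \<rightarrow>\<^sub>M prob_algebra (PiM {0..Suc n} (\<lambda>_. E))"
proof (rule measurable_bind_prob_space2)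
  show "(\<lambda>\<omega>. K (\<omega> n)) \<in> PiM {0..n} (\<lambda>_. E) \<rightarrow>\<^sub>M prob_algebra E"
    by (rule measurable_compose[OF measurable_component_singleton[of n "{0..n}" "\<lambda>_. E"] K]) simp
  have eq: "insert (Suc n) {0..n} = {0..Suc n}" by auto
  have "(\<lambda>(f, y). f(Suc n := y)) \<in> (PiM {0..n} (\<lambda>_. E) \<Otimes>\<^sub>M E) \<rightarrow>\<^sub>M PiM {0..Suc n} (\<lambda>_. E)"
    using measurable_add_dim[of "Suc n" "{0..n}" "\<lambda>_. E"] unfolding eq .
  then show "(\<lambda>(\<omega>, y). return (PiM {0..Suc n} (\<lambda>_. E)) (fun_upd \<omega> (Suc n) y))
      \<in> (PiM {0..n} (\<lambda>_. E) \<Otimes>\<^sub>M E) \<rightarrow>\<^sub>M prob_algebra (PiM {0..Suc n} (\<lambda>_. E))"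
    using measurable_compose[OF _ measurable_return_prob_space] by (simp add: case_prod_beta')
qed

lemma chain_in:
  assumes K: "K \<in> E \<rightarrow>\<^sub>M prob_algebra E" and x: "x \<in> space E"
  shows "chain_path E K n x \<in> space (prob_algebra (PiM {0..n} (\<lambda>_. E)))"
proof (induction n)
  case 0
  have "(\<lambda>i. if i = 0 then x else undefined) \<in> space (PiM {0} (\<lambda>_. E))"
    using x by (auto simp: space_PiM PiE_def extensional_def)
  then show ?case using prob_space_return by (simp add: space_prob_algebra)
next
  case (Suc n)
  show ?case
    using Suc prob_space_bind'[OF Suc step_meas[OF K]] sets_bind'[OF Suc step_meas[OF K]]
    by (simp add: space_prob_algebra)
qed

lemma chain_sets:
  assumes K: "K \<in> E \<rightarrow>\<^sub>M prob_algebra E" and x: "x \<in> space E"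
  shows "sets (chain_path E K n x) = sets (PiM {0..n} (\<lambda>_. E))"
    and "space (chain_path E K n x) = space (PiM {0..n} (\<lambda>_. E))"
    and "prob_space (chain_path E K n x)"
  using chain_in[OF K x, of n] sets_eq_imp_space_eq by (auto simp: space_prob_algebra)

lemma chain_nn_step:
  assumes K: "K \<in> E \<rightarrow>\<^sub>M prob_algebra E" and x: "x \<in> space E"
    and G: "G \<in> borel_measurable (PiM {0..Suc n} (\<lambda>_. E))"
  shows "(\<integral>\<^sup>+\<omega>. G \<omega> \<partial>chain_path E K (Suc n) x)
     = (\<integral>\<^sup>+\<omega>. (\<integral>\<^sup>+y. G (fun_upd \<omega> (Suc n) y) \<partial>K (\<omega> n)) \<partial>chain_path E K n x)"
proof -
  have "(\<integral>\<^sup>+\<omega>. G \<omega> \<partial>chain_path E K (Suc n) x) = (\<integral>\<^sup>+\<omega>. (\<integral>\<^sup>+z. G z \<partial>(K (\<omega> n) \<bind> (\<lambda>y. return (PiM {0..Suc n} (\<lambda>_. E)) (fun_upd \<omega> (Suc n) y)))) \<partial>chain_path E K n x)"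
    unfolding chain_path.simps
    apply (rule nn_integral_bind[OF G])
    using measurable_prob_algebraD[OF step_meas[OF K]] chain_sets(1)[OF K x, of n]
    by (simp cong: measurable_cong_sets)
  also have "\<dots> = (\<integral>\<^sup>+\<omega>. (\<integral>\<^sup>+y. G (fun_upd \<omega> (Suc n) y) \<partial>K (\<omega> n)) \<partial>chain_path E K n x)"
  proof (rule nn_integral_cong)
    fix \<omega> assume "\<omega> \<in> space (chain_path E K n x)"
    then have om: "\<omega> \<in> space (PiM {0..n} (\<lambda>_. E))" using chain_sets(2)[OF K x] by simp
    have Kn: "K (\<omega> n) \<in> space (prob_algebra E)"
      using measurable_space[OF K, of "\<omega> n"] om by (auto simp: space_PiM PiE_iff)
    then have sK: "sets (K (\<omega> n)) = sets E" by (simp add: space_prob_algebra)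
    have upd: "(\<lambda>y. fun_upd \<omega> (Suc n) y) \<in> E \<rightarrow>\<^sub>M PiM {0..Suc n} (\<lambda>_. E)"
      using measurable_component_update[OF om, of "Suc n"] by (simp add: atLeast0_atMost_Suc)
    have "(\<integral>\<^sup>+z. G z \<partial>(K (\<omega> n) \<bind> (\<lambda>y. return (PiM {0..Suc n} (\<lambda>_. E)) (fun_upd \<omega> (Suc n) y))))
        = (\<integral>\<^sup>+y. (\<integral>\<^sup>+z. G z \<partial>return (PiM {0..Suc n} (\<lambda>_. E)) (fun_upd \<omega> (Suc n) y)) \<partial>K (\<omega> n))"
      apply (rule nn_integral_bind[OF G])
      using measurable_compose[OF upd return_measurable] sK
      by (simp cong: measurable_cong_sets)
    also have "\<dots> = (\<integral>\<^sup>+y. G (fun_upd \<omega> (Suc n) y) \<partial>K (\<omega> n))"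
      apply (rule nn_integral_cong)
      apply (rule nn_integral_return)
      using measurable_space[OF upd] sets_eq_imp_space_eq[OF sK] G by auto
    finally show "(\<integral>\<^sup>+z. G z \<partial>(K (\<omega> n) \<bind> (\<lambda>y. return (PiM {0..Suc n} (\<lambda>_. E)) (fun_upd \<omega> (Suc n) y))))
        = (\<integral>\<^sup>+y. G (fun_upd \<omega> (Suc n) y) \<partial>K (\<omega> n))" .
  qed
  finally show ?thesis .
qed


definition Dn :: "('a \<Rightarrow> 'a measure) \<Rightarrow> ('a \<Rightarrow> real) \<Rightarrow> nat \<Rightarrow> (nat \<Rightarrow> 'a) \<Rightarrow> real" where
  "Dn M h n \<omega> = (\<Prod>k\<in>{1..n}. (1 / h (\<omega> k)) / kapply M (\<lambda>z. 1 / h z) (\<omega> (k - 1)))"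

context
  fixes E :: "'a measure" and M :: "'a \<Rightarrow> 'a measure" and h :: "'a \<Rightarrow> real"
  assumes M_kernel: "M \<in> E \<rightarrow>\<^sub>M prob_algebra E"
    and h_meas: "h \<in> borel_measurable E" and h_pos: "\<And>y. y \<in> space E \<Longrightarrow> h y > 0"
    and Mh_fin: "\<And>y. y \<in> space E \<Longrightarrow> (\<integral>\<^sup>+ z. ennreal (1 / h z) \<partial>M y) < \<infinity>"
    and Mh_pos: "\<And>y. y \<in> space E \<Longrightarrow> kapply M (\<lambda>z. 1 / h z) y > 0"
begin

lemma M_sets: "y \<in> space E \<Longrightarrow> sets (M y) = sets E"
  and M_space: "y \<in> space E \<Longrightarrow> space (M y) = space E"
  and M_prob: "y \<in> space E \<Longrightarrow> prob_space (M y)"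
  using measurable_space[OF M_kernel, of y] sets_eq_imp_space_eq by (auto simp: space_prob_algebra)

lemma m_meas: "kapply M (\<lambda>z. 1 / h z) \<in> borel_measurable E"
  unfolding kapply_def
  by (rule measurable_compose[OF measurable_prob_algebraD[OF M_kernel] integral_measurable_subprob_algebra])
     (use h_meas in measurable)

lemma nn_m: "y \<in> space E \<Longrightarrow> (\<integral>\<^sup>+ z. ennreal (1 / h z) \<partial>M y) = ennreal (kapply M (\<lambda>z. 1 / h z) y)"
proof -
  assume y: "y \<in> space E"
  have meas: "(\<lambda>z. 1 / h z) \<in> borel_measurable (M y)"
    using h_meas M_sets[OF y] by (simp cong: measurable_cong_sets)
  have ae: "AE z in M y. 0 \<le> 1 / h z"
    by (rule AE_I2) (use h_pos M_space[OF y] in \<open>auto simp: less_imp_le\<close>)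
  have "integrable (M y) (\<lambda>z. 1 / h z)"
    by (rule integrableI_nonneg[OF meas ae Mh_fin[OF y]])
  then show ?thesis unfolding kapply_def by (rule nn_integral_eq_integral[OF _ ae])
qed

abbreviation "m \<equiv> kapply M (\<lambda>z. 1 / h z)"

lemma tw_sets: "y \<in> space E \<Longrightarrow> sets (twisted_kernel M h y) = sets E"
  unfolding twisted_kernel_def using M_sets by simp

lemma tw_nn: "y \<in> space E \<Longrightarrow> G \<in> borel_measurable E \<Longrightarrow>
   (\<integral>\<^sup>+z. G z \<partial>twisted_kernel M h y) = (\<integral>\<^sup>+z. ennreal ((1 / h z) / m y) * G z \<partial>M y)"
  unfolding twisted_kernel_def
  apply (rule nn_integral_density)
  using h_meas M_sets by (simp_all cong: measurable_cong_sets)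

lemma tw_prob: "y \<in> space E \<Longrightarrow> prob_space (twisted_kernel M h y)"
proof -
  assume y: "y \<in> space E"
  have "emeasure (twisted_kernel M h y) (space (twisted_kernel M h y)) = (\<integral>\<^sup>+z. 1 \<partial>twisted_kernel M h y)"
    by simp
  also have "\<dots> = (\<integral>\<^sup>+z. ennreal ((1 / h z) / m y) \<partial>M y)"
    using tw_nn[OF y, of "\<lambda>_. 1"] by simp
  also have "\<dots> = (\<integral>\<^sup>+z. ennreal (1 / h z) * ennreal (1 / m y) \<partial>M y)"
    apply (rule nn_integral_cong)
    using h_pos M_space[OF y] Mh_pos[OF y] by (simp add: ennreal_mult[symmetric] less_imp_le)
  also have "\<dots> = ennreal (m y) * ennreal (1 / m y)"
    apply (subst nn_integral_multc)
    using h_meas M_sets[OF y] nn_m[OF y] by (simp_all cong: measurable_cong_sets)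
  also have "\<dots> = 1"
    using Mh_pos[OF y] by (simp add: ennreal_mult[symmetric] less_imp_le)
  finally show ?thesis by (rule prob_spaceI)
qed

lemma tw_kernel: "twisted_kernel M h \<in> E \<rightarrow>\<^sub>M prob_algebra E"
proof (rule measurable_prob_algebraI)
  show "\<And>y. y \<in> space E \<Longrightarrow> prob_space (twisted_kernel M h y)" by (rule tw_prob)
  show "twisted_kernel M h \<in> E \<rightarrow>\<^sub>M subprob_algebra E"
  proof (rule measurable_subprob_algebra)
    show "\<And>a. a \<in> space E \<Longrightarrow> subprob_space (twisted_kernel M h a)"
      using tw_prob prob_space_imp_subprob_space by blast
    show "\<And>a. a \<in> space E \<Longrightarrow> sets (twisted_kernel M h a) = sets E" by (rule tw_sets)
    fix A assume A: "A \<in> sets E"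
    have "(\<lambda>a. \<integral>\<^sup>+z. ennreal ((1 / h z) / m a) * indicator A z \<partial>M a) \<in> borel_measurable E"
    proof (rule nn_integral_measurable_subprob_algebra2[OF _ measurable_prob_algebraD[OF M_kernel]])
      have 1: "(\<lambda>p. 1 / h (snd p) / m (fst p)) \<in> borel_measurable (E \<Otimes>\<^sub>M E)"
        using measurable_compose[OF measurable_snd h_meas] measurable_compose[OF measurable_fst m_meas]
        by (intro borel_measurable_divide) auto
      have 2: "(\<lambda>p. indicator A (snd p) :: ennreal) \<in> borel_measurable (E \<Otimes>\<^sub>M E)"
        by (rule measurable_compose[OF measurable_snd borel_measurable_indicator[OF A]])
      show "(\<lambda>(a, z). ennreal (1 / h z / m a) * indicator A z) \<in> borel_measurable (E \<Otimes>\<^sub>M E)"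
        unfolding case_prod_beta
        using measurable_compose[OF 1 measurable_ennreal] 2 by (rule borel_measurable_times_ennreal)
    qed
    then show "(\<lambda>a. emeasure (twisted_kernel M h a) A) \<in> borel_measurable E"
    proof (rule measurable_cong[THEN iffD1, rotated])
      fix a assume a: "a \<in> space E"
      have "emeasure (twisted_kernel M h a) A = (\<integral>\<^sup>+z. indicator A z \<partial>twisted_kernel M h a)"
        using A tw_sets[OF a] by (simp only: nn_integral_indicator)
      also have "\<dots> = (\<integral>\<^sup>+z. ennreal ((1 / h z) / m a) * indicator A z \<partial>M a)"
        by (rule tw_nn[OF a borel_measurable_indicator[OF A]])
      finally show "(\<integral>\<^sup>+z. ennreal ((1 / h z) / m a) * indicator A z \<partial>M a) = emeasure (twisted_kernel M h a) A" by simp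
    qed
  qed
qed




lemma Dn_meas: "n \<le> N \<Longrightarrow> Dn M h n \<in> borel_measurable (PiM {0..N} (\<lambda>_. E))"
  unfolding Dn_def
proof (intro borel_measurable_prod)
  fix k assume "n \<le> N" "k \<in> {1..n}"
  then have k: "k \<in> {0..N}" "k - 1 \<in> {0..N}" by auto
  have hk: "(\<lambda>x. h (x k)) \<in> borel_measurable (PiM {0..N} (\<lambda>_. E))"
    using measurable_compose[OF measurable_component_singleton[OF k(1)] h_meas] by simp
  have mk: "(\<lambda>x. m (x (k - 1))) \<in> borel_measurable (PiM {0..N} (\<lambda>_. E))"
    using measurable_compose[OF measurable_component_singleton[OF k(2)] m_meas] by simp
  show "(\<lambda>x. 1 / h (x k) / m (x (k - 1))) \<in> borel_measurable (PiM {0..N} (\<lambda>_. E))"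
    by (intro borel_measurable_divide borel_measurable_const hk mk)
qed

lemma Dn_nonneg: "n \<le> N \<Longrightarrow> \<omega> \<in> space (PiM {0..N} (\<lambda>_. E)) \<Longrightarrow> 0 \<le> Dn M h n \<omega>"
  unfolding Dn_def
proof (rule prod_nonneg)
  fix k assume "n \<le> N" "\<omega> \<in> space (PiM {0..N} (\<lambda>_. E))" "k \<in> {1..n}"
  then have "\<omega> k \<in> space E" "\<omega> (k - 1) \<in> space E" by (auto simp: space_PiM PiE_iff)
  then show "0 \<le> 1 / h (\<omega> k) / m (\<omega> (k - 1))"
    using h_pos Mh_pos by (simp add: less_imp_le)
qed

lemma Dn_upd: "\<omega> \<in> space (PiM {0..n} (\<lambda>_. E)) \<Longrightarrow>
   Dn M h (Suc n) (fun_upd \<omega> (Suc n) y) = Dn M h n \<omega> * (1 / h y / m (\<omega> n))"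
proof -
  have eq: "(\<Prod>k\<in>{1..n}. (1 / h (fun_upd \<omega> (Suc n) y k)) / m (fun_upd \<omega> (Suc n) y (k - 1)))
      = (\<Prod>k\<in>{1..n}. (1 / h (\<omega> k)) / m (\<omega> (k - 1)))"
    by (rule prod.cong) auto
  show ?thesis unfolding Dn_def prod.cl_ivl_Suc eq by simp
qed


lemma upd_meas: "(\<lambda>p. fun_upd (fst p) (Suc n) (snd p)) \<in> (PiM {0..n} (\<lambda>_. E) \<Otimes>\<^sub>M E) \<rightarrow>\<^sub>M PiM {0..Suc n} (\<lambda>_. E)"
proof -
  have eq: "insert (Suc n) {0..n} = {0..Suc n}" by auto
  show ?thesis
    using measurable_add_dim[of "Suc n" "{0..n}" "\<lambda>_. E"] unfolding eq by (simp add: case_prod_beta')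
qed

lemma dens_nn:
  assumes x: "x \<in> space E"
  shows "G \<in> borel_measurable (PiM {0..n} (\<lambda>_. E)) \<Longrightarrow>
    (\<integral>\<^sup>+\<omega>. G \<omega> \<partial>chain_path E (twisted_kernel M h) n x)
     = (\<integral>\<^sup>+\<omega>. ennreal (Dn M h n \<omega>) * G \<omega> \<partial>chain_path E M n x)"
proof (induction n arbitrary: G)
  case 0
  then show ?case by (simp add: Dn_def)
next
  case (Suc n)
  note G = Suc.prems
  let ?K = "twisted_kernel M h"
  define \<Phi> where "\<Phi> \<omega> = (\<integral>\<^sup>+y. ennreal ((1 / h y) / m (\<omega> n)) * G (fun_upd \<omega> (Suc n) y) \<partial>M (\<omega> n))" for \<omega>
  have Gupd: "(\<lambda>p. G (fun_upd (fst p) (Suc n) (snd p))) \<in> borel_measurable (PiM {0..n} (\<lambda>_. E) \<Otimes>\<^sub>M E)"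
    by (rule measurable_compose[OF upd_meas G])
  have Mn: "(\<lambda>\<omega>. M (\<omega> n)) \<in> PiM {0..n} (\<lambda>_. E) \<rightarrow>\<^sub>M subprob_algebra E"
    by (rule measurable_compose[OF measurable_component_singleton[of n "{0..n}" "\<lambda>_. E"] measurable_prob_algebraD[OF M_kernel]]) simp
  have fm: "(\<lambda>p. ennreal ((1 / h (snd p)) / m (fst p n))) \<in> borel_measurable (PiM {0..n} (\<lambda>_. E) \<Otimes>\<^sub>M E)"
  proof -
    have 1: "(\<lambda>p. h (snd p)) \<in> borel_measurable (PiM {0..n} (\<lambda>_. E) \<Otimes>\<^sub>M E)"
      by (rule measurable_compose[OF measurable_snd h_meas])
    have 2: "(\<lambda>p. m (fst p n)) \<in> borel_measurable (PiM {0..n} (\<lambda>_. E) \<Otimes>\<^sub>M E)"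
      by (rule measurable_compose[OF measurable_compose[OF measurable_fst measurable_component_singleton[of n "{0..n}" "\<lambda>_. E"]] m_meas]) simp
    show ?thesis
      by (intro measurable_compose[OF _ measurable_ennreal] borel_measurable_divide borel_measurable_const 1 2)
  qed
  have \<Phi>_meas: "\<Phi> \<in> borel_measurable (PiM {0..n} (\<lambda>_. E))"
    unfolding \<Phi>_def
    apply (rule nn_integral_measurable_subprob_algebra2[OF _ Mn])
    using borel_measurable_times_ennreal[OF fm Gupd] by (simp add: case_prod_beta')
  have "(\<integral>\<^sup>+\<omega>. G \<omega> \<partial>chain_path E ?K (Suc n) x)
      = (\<integral>\<^sup>+\<omega>. (\<integral>\<^sup>+y. G (fun_upd \<omega> (Suc n) y) \<partial>?K (\<omega> n)) \<partial>chain_path E ?K n x)"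
    by (rule chain_nn_step[OF tw_kernel x G])
  also have "\<dots> = (\<integral>\<^sup>+\<omega>. \<Phi> \<omega> \<partial>chain_path E ?K n x)"
  proof (rule nn_integral_cong)
    fix \<omega> assume "\<omega> \<in> space (chain_path E ?K n x)"
    then have om: "\<omega> \<in> space (PiM {0..n} (\<lambda>_. E))" using chain_sets(2)[OF tw_kernel x] by simp
    then have omn: "\<omega> n \<in> space E" by (auto simp: space_PiM PiE_iff)
    have upd: "fun_upd \<omega> (Suc n) \<in> E \<rightarrow>\<^sub>M PiM {0..Suc n} (\<lambda>_. E)"
      using measurable_component_update[OF om, of "Suc n"] by (simp add: atLeast0_atMost_Suc)
    have "(\<lambda>y. G (fun_upd \<omega> (Suc n) y)) \<in> borel_measurable E"
      using measurable_compose[OF upd G] by (simp add: fun_upd_def)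
    then show "(\<integral>\<^sup>+y. G (fun_upd \<omega> (Suc n) y) \<partial>?K (\<omega> n)) = \<Phi> \<omega>"
      unfolding \<Phi>_def by (rule tw_nn[OF omn])
  qed
  also have "\<dots> = (\<integral>\<^sup>+\<omega>. ennreal (Dn M h n \<omega>) * \<Phi> \<omega> \<partial>chain_path E M n x)"
    by (rule Suc.IH[OF \<Phi>_meas])
  also have "\<dots> = (\<integral>\<^sup>+\<omega>. (\<integral>\<^sup>+y. ennreal (Dn M h (Suc n) (fun_upd \<omega> (Suc n) y)) * G (fun_upd \<omega> (Suc n) y) \<partial>M (\<omega> n)) \<partial>chain_path E M n x)"
  proof (rule nn_integral_cong)
    fix \<omega> assume "\<omega> \<in> space (chain_path E M n x)"
    then have om: "\<omega> \<in> space (PiM {0..n} (\<lambda>_. E))" using chain_sets(2)[OF M_kernel x] by simp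
    then have omn: "\<omega> n \<in> space E" by (auto simp: space_PiM PiE_iff)
    have D0: "0 \<le> Dn M h n \<omega>" by (rule Dn_nonneg[OF order_refl om])
    have "ennreal (Dn M h n \<omega>) * \<Phi> \<omega> = (\<integral>\<^sup>+y. ennreal (Dn M h n \<omega>) * (ennreal ((1 / h y) / m (\<omega> n)) * G (fun_upd \<omega> (Suc n) y)) \<partial>M (\<omega> n))"
      unfolding \<Phi>_def
    proof (rule nn_integral_cmult[symmetric])
      have "(\<lambda>y. (\<omega>, y)) \<in> M (\<omega> n) \<rightarrow>\<^sub>M (PiM {0..n} (\<lambda>_. E) \<Otimes>\<^sub>M E)"
        using om M_sets[OF omn] by (simp cong: measurable_cong_sets)
      from measurable_compose[OF this borel_measurable_times_ennreal[OF fm Gupd]]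
      show "(\<lambda>y. ennreal ((1 / h y) / m (\<omega> n)) * G (fun_upd \<omega> (Suc n) y)) \<in> borel_measurable (M (\<omega> n))"
        by simp
    qed
    also have "\<dots> = (\<integral>\<^sup>+y. ennreal (Dn M h (Suc n) (fun_upd \<omega> (Suc n) y)) * G (fun_upd \<omega> (Suc n) y) \<partial>M (\<omega> n))"
    proof (rule nn_integral_cong)
      fix y assume "y \<in> space (M (\<omega> n))"
      then have y: "y \<in> space E" using M_space[OF omn] by simp
      have "0 \<le> 1 / h y / m (\<omega> n)" using h_pos[OF y] Mh_pos[OF omn] by simp
      then have e: "ennreal (Dn M h n \<omega> * (1 / h y / m (\<omega> n))) = ennreal (Dn M h n \<omega>) * ennreal (1 / h y / m (\<omega> n))"
        using D0 by (rule ennreal_mult[rotated])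
      show "ennreal (Dn M h n \<omega>) * (ennreal ((1 / h y) / m (\<omega> n)) * G (fun_upd \<omega> (Suc n) y))
          = ennreal (Dn M h (Suc n) (fun_upd \<omega> (Suc n) y)) * G (fun_upd \<omega> (Suc n) y)"
        unfolding Dn_upd[OF om] e by (simp only: mult.assoc)
    qed
    finally show "ennreal (Dn M h n \<omega>) * \<Phi> \<omega> = (\<integral>\<^sup>+y. ennreal (Dn M h (Suc n) (fun_upd \<omega> (Suc n) y)) * G (fun_upd \<omega> (Suc n) y) \<partial>M (\<omega> n))" .
  qed
  also have "\<dots> = (\<integral>\<^sup>+\<omega>. ennreal (Dn M h (Suc n) \<omega>) * G \<omega> \<partial>chain_path E M (Suc n) x)"
  proof (rule chain_nn_step[OF M_kernel x, symmetric])
    show "(\<lambda>\<omega>. ennreal (Dn M h (Suc n) \<omega>) * G \<omega>) \<in> borel_measurable (PiM {0..Suc n} (\<lambda>_. E))"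
      using Dn_meas[OF order_refl, of "Suc n"] G by measurable
  qed
  finally show ?case .
qed

lemma dens_eq:
  assumes x: "x \<in> space E"
  shows "chain_path E (twisted_kernel M h) n x = density (chain_path E M n x) (\<lambda>\<omega>. ennreal (Dn M h n \<omega>))"
proof (rule measure_eqI)
  show sets: "sets (chain_path E (twisted_kernel M h) n x) = sets (density (chain_path E M n x) (\<lambda>\<omega>. ennreal (Dn M h n \<omega>)))"
    using chain_sets(1)[OF tw_kernel x] chain_sets(1)[OF M_kernel x] by simp
  fix A assume A: "A \<in> sets (chain_path E (twisted_kernel M h) n x)"
  then have A': "A \<in> sets (PiM {0..n} (\<lambda>_. E))" using chain_sets(1)[OF tw_kernel x] by simp
  have "emeasure (chain_path E (twisted_kernel M h) n x) A = (\<integral>\<^sup>+\<omega>. indicator A \<omega> \<partial>chain_path E (twisted_kernel M h) n x)"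
    using A by (simp only: nn_integral_indicator)
  also have "\<dots> = (\<integral>\<^sup>+\<omega>. ennreal (Dn M h n \<omega>) * indicator A \<omega> \<partial>chain_path E M n x)"
    by (rule dens_nn[OF x borel_measurable_indicator[OF A']])
  also have "\<dots> = emeasure (density (chain_path E M n x) (\<lambda>\<omega>. ennreal (Dn M h n \<omega>))) A"
  proof (rule emeasure_density[symmetric])
    show "(\<lambda>\<omega>. ennreal (Dn M h n \<omega>)) \<in> borel_measurable (chain_path E M n x)"
      using Dn_meas[OF order_refl, of n] chain_sets(1)[OF M_kernel x] by (simp cong: measurable_cong_sets)
    show "A \<in> sets (chain_path E M n x)" using A' chain_sets(1)[OF M_kernel x] by simp
  qed
  finally show "emeasure (chain_path E (twisted_kernel M h) n x) A = emeasure (density (chain_path E M n x) (\<lambda>\<omega>. ennreal (Dn M h n \<omega>))) A" .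
qed

end

lemma tele:
  fixes a b :: "nat \<Rightarrow> real"
  shows "(\<And>k. k \<le> n \<Longrightarrow> 0 < a k) \<Longrightarrow> (\<And>k. k \<le> n \<Longrightarrow> 0 < b k) \<Longrightarrow>
    (\<Prod>k\<in>{1..n}. 1 / b k / a (k - 1)) * (\<Prod>k\<in>{1..n}. b k * a k) = a n / a 0"
proof (induction n)
  case 0
  then show ?case by simp
next
  case (Suc n)
  have IH: "(\<Prod>k\<in>{1..n}. 1 / b k / a (k - 1)) * (\<Prod>k\<in>{1..n}. b k * a k) = a n / a 0"
    using Suc by simp
  have pos: "0 < a n" "0 < a (Suc n)" "0 < b (Suc n)" "0 < a 0" using Suc.prems by auto
  have "(\<Prod>k\<in>{1..Suc n}. 1 / b k / a (k - 1)) * (\<Prod>k\<in>{1..Suc n}. b k * a k)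
      = ((\<Prod>k\<in>{1..n}. 1 / b k / a (k - 1)) * (\<Prod>k\<in>{1..n}. b k * a k)) * (1 / b (Suc n) / a n * (b (Suc n) * a (Suc n)))"
    by (simp add: prod.cl_ivl_Suc)
  also have "\<dots> = a (Suc n) / a 0" unfolding IH using pos by (simp add: field_simps)
  finally show ?case .
qed

lemma fin_ident:
  fixes a b c :: "nat \<Rightarrow> real"
  assumes "\<And>k. k \<le> n \<Longrightarrow> 0 < a k" "\<And>k. k \<le> n \<Longrightarrow> 0 < b k"
  shows "(\<Prod>k\<in>{1..n}. 1 / b k / a (k - 1)) * (F * (a 0 / a n) * (\<Prod>k\<in>{1..n}. c k * b k * a k))
    = F * (\<Prod>k\<in>{1..n}. c k)"
proof -
  have "(\<Prod>k\<in>{1..n}. c k * b k * a k) = (\<Prod>k\<in>{1..n}. c k) * (\<Prod>k\<in>{1..n}. b k * a k)"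
    by (simp add: prod.distrib mult.assoc)
  moreover have "0 < a n" "0 < a 0" using assms by auto
  ultimately show ?thesis
    using tele[of n a b, OF assms] by (simp add: field_simps)
qed

theorem mainTheorem11:
  fixes E :: "'a measure" and M :: "'a \<Rightarrow> 'a measure"
    and H h :: "'a \<Rightarrow> real" and eps kappa :: real and n :: nat and x :: 'a
    and F :: "(nat \<Rightarrow> 'a) \<Rightarrow> real"
  assumes M_kernel: "M \<in> E \<rightarrow>\<^sub>M prob_algebra E"
    and H_meas: "H \<in> borel_measurable E" and H_pos: "\<And>y. y \<in> space E \<Longrightarrow> H y > 0"
    and h_meas: "h \<in> borel_measurable E" and h_pos: "\<And>y. y \<in> space E \<Longrightarrow> h y > 0"
    and Mh_fin: "\<And>y. y \<in> space E \<Longrightarrow> (\<integral>\<^sup>+ z. ennreal (1 / h z) \<partial>M y) < \<infinity>"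
    and Mh_pos: "\<And>y. y \<in> space E \<Longrightarrow> kapply M (\<lambda>z. 1 / h z) y > 0"
    and eps: "0 < eps" "eps < 1" and kappa: "0 < kappa"
    and Hh_bound: "\<And>y. y \<in> space E \<Longrightarrow> H y * h y * kapply M (\<lambda>z. 1 / h z) y \<le> 1 - eps"
    and Mh_ratio: "\<And>y z. y \<in> space E \<Longrightarrow> z \<in> space E \<Longrightarrow>
        kapply M (\<lambda>w. 1 / h w) y \<le> kappa * kapply M (\<lambda>w. 1 / h w) z"
    and n: "n \<ge> 1" and x: "x \<in> space E"
    and F_meas: "F \<in> borel_measurable (PiM {1..n} (\<lambda>_. E))"
    and F_bdd: "\<exists>B. \<forall>\<omega>\<in>space (PiM {1..n} (\<lambda>_. E)). \<bar>F \<omega>\<bar> \<le> B"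
  shows "(\<integral>\<omega>. F (restrict \<omega> {1..n}) * (\<Prod>k\<in>{1..n}. H (\<omega> k)) \<partial>chain_path E M n x)
       = (\<integral>\<omega>. F (restrict \<omega> {1..n})
              * (kapply M (\<lambda>z. 1 / h z) (\<omega> 0) / kapply M (\<lambda>z. 1 / h z) (\<omega> n))
              * (\<Prod>k\<in>{1..n}. H (\<omega> k) * h (\<omega> k) * kapply M (\<lambda>z. 1 / h z) (\<omega> k))
           \<partial>chain_path E (twisted_kernel M h) n x)
     \<and> (\<forall>y\<in>space E. (\<integral>\<omega>. (\<Prod>k\<in>{1..n}. H (\<omega> k)) \<partial>chain_path E M n y) \<le> kappa * (1 - eps) ^ n)"
proof -
  let ?m = "kapply M (\<lambda>z. 1 / h z)"
  let ?K = "twisted_kernel M h"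
  note facts = M_kernel h_meas h_pos Mh_fin Mh_pos
  have Kt: "?K \<in> E \<rightarrow>\<^sub>M prob_algebra E" by (rule tw_kernel[OF facts])
  have mm: "?m \<in> borel_measurable E" by (rule m_meas[OF facts])
  have comp: "(\<lambda>\<omega>. f (\<omega> k)) \<in> borel_measurable (PiM {0..n} (\<lambda>_. E))"
    if "k \<le> n" "f \<in> borel_measurable E" for f :: "'a \<Rightarrow> real" and k
    using measurable_compose[OF measurable_component_singleton[of k "{0..n}" "\<lambda>_. E"] that(2)] that(1) by simp
  have P1: "(\<integral>\<omega>. G (restrict \<omega> {1..n}) * (\<Prod>k\<in>{1..n}. H (\<omega> k)) \<partial>chain_path E M n y)
       = (\<integral>\<omega>. G (restrict \<omega> {1..n})
              * (?m (\<omega> 0) / ?m (\<omega> n))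
              * (\<Prod>k\<in>{1..n}. H (\<omega> k) * h (\<omega> k) * ?m (\<omega> k))
           \<partial>chain_path E ?K n y)"
    if y: "y \<in> space E" and G: "G \<in> borel_measurable (PiM {1..n} (\<lambda>_. E))" for y G
  proof -
    let ?g = "\<lambda>\<omega>. G (restrict \<omega> {1..n}) * (?m (\<omega> 0) / ?m (\<omega> n))
              * (\<Prod>k\<in>{1..n}. H (\<omega> k) * h (\<omega> k) * ?m (\<omega> k))"
    have Gr: "(\<lambda>\<omega>. G (restrict \<omega> {1..n})) \<in> borel_measurable (PiM {0..n} (\<lambda>_. E))"
      using measurable_compose[OF measurable_restrict_subset[of "{1..n}" "{0..n}" "\<lambda>_. E"] G] by simp
    have gm: "?g \<in> borel_measurable (PiM {0..n} (\<lambda>_. E))"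
      apply (intro borel_measurable_times borel_measurable_divide Gr comp mm borel_measurable_prod)
      using H_meas h_meas mm by (auto intro!: comp)
    have sM: "sets (chain_path E M n y) = sets (PiM {0..n} (\<lambda>_. E))"
      by (rule chain_sets(1)[OF M_kernel y])
    have spM: "space (chain_path E M n y) = space (PiM {0..n} (\<lambda>_. E))"
      by (rule chain_sets(2)[OF M_kernel y])
    have Dm: "Dn M h n \<in> borel_measurable (chain_path E M n y)"
      using Dn_meas[OF facts order_refl, of n] sM by (simp cong: measurable_cong_sets)
    have "(\<integral>\<omega>. ?g \<omega> \<partial>chain_path E ?K n y) = (\<integral>\<omega>. ?g \<omega> \<partial>density (chain_path E M n y) (\<lambda>\<omega>. ennreal (Dn M h n \<omega>)))"
      by (simp only: dens_eq[OF facts y])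
    also have "\<dots> = (\<integral>\<omega>. Dn M h n \<omega> *\<^sub>R ?g \<omega> \<partial>chain_path E M n y)"
    proof (rule integral_density)
      show "?g \<in> borel_measurable (chain_path E M n y)" using gm sM by (simp cong: measurable_cong_sets)
      show "Dn M h n \<in> borel_measurable (chain_path E M n y)" by (rule Dm)
      show "AE x in chain_path E M n y. 0 \<le> Dn M h n x"
        by (rule AE_I2) (use Dn_nonneg[OF facts order_refl] spM in auto)
    qed
    also have "\<dots> = (\<integral>\<omega>. G (restrict \<omega> {1..n}) * (\<Prod>k\<in>{1..n}. H (\<omega> k)) \<partial>chain_path E M n y)"
    proof (rule Bochner_Integration.integral_cong[OF refl])
      fix \<omega> assume "\<omega> \<in> space (chain_path E M n y)"
      then have om: "\<And>k. k \<le> n \<Longrightarrow> \<omega> k \<in> space E" using spM by (auto simp: space_PiM PiE_iff)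
      show "Dn M h n \<omega> *\<^sub>R ?g \<omega> = G (restrict \<omega> {1..n}) * (\<Prod>k\<in>{1..n}. H (\<omega> k))"
        unfolding real_scaleR_def Dn_def
        using fin_ident[of n "\<lambda>k. ?m (\<omega> k)" "\<lambda>k. h (\<omega> k)" "G (restrict \<omega> {1..n})" "\<lambda>k. H (\<omega> k)"]
          om Mh_pos h_pos by simp
    qed
    finally show ?thesis by simp
  qed
  show ?thesis
  proof
    show "(\<integral>\<omega>. F (restrict \<omega> {1..n}) * (\<Prod>k\<in>{1..n}. H (\<omega> k)) \<partial>chain_path E M n x)
       = (\<integral>\<omega>. F (restrict \<omega> {1..n})
              * (?m (\<omega> 0) / ?m (\<omega> n))
              * (\<Prod>k\<in>{1..n}. H (\<omega> k) * h (\<omega> k) * ?m (\<omega> k))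
           \<partial>chain_path E ?K n x)"
      by (rule P1[OF x F_meas])
    show "\<forall>y\<in>space E. (\<integral>\<omega>. (\<Prod>k\<in>{1..n}. H (\<omega> k)) \<partial>chain_path E M n y) \<le> kappa * (1 - eps) ^ n"
    proof
      fix y assume y: "y \<in> space E"
      let ?g = "\<lambda>\<omega>. (?m (\<omega> 0) / ?m (\<omega> n)) * (\<Prod>k\<in>{1..n}. H (\<omega> k) * h (\<omega> k) * ?m (\<omega> k))"
      have eq: "(\<integral>\<omega>. (\<Prod>k\<in>{1..n}. H (\<omega> k)) \<partial>chain_path E M n y) = (\<integral>\<omega>. ?g \<omega> \<partial>chain_path E ?K n y)"
        using P1[OF y, of "\<lambda>_. 1"] by simp
      have spK: "space (chain_path E ?K n y) = space (PiM {0..n} (\<lambda>_. E))"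
        by (rule chain_sets(2)[OF Kt y])
      have sK: "sets (chain_path E ?K n y) = sets (PiM {0..n} (\<lambda>_. E))"
        by (rule chain_sets(1)[OF Kt y])
      have PS: "prob_space (chain_path E ?K n y)" by (rule chain_sets(3)[OF Kt y])
      have bnd: "0 \<le> ?g \<omega> \<and> ?g \<omega> \<le> kappa * (1 - eps) ^ n" if "\<omega> \<in> space (chain_path E ?K n y)" for \<omega>
      proof -
        have om: "\<And>k. k \<le> n \<Longrightarrow> \<omega> k \<in> space E" using that spK by (auto simp: space_PiM PiE_iff)
        have m0: "0 < ?m (\<omega> 0)" "0 < ?m (\<omega> n)" using Mh_pos om by auto
        have r: "?m (\<omega> 0) / ?m (\<omega> n) \<le> kappa"
          using Mh_ratio[OF om om, of 0 n] m0 by (simp add: divide_le_eq)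
        have p: "(\<Prod>k\<in>{1..n}. H (\<omega> k) * h (\<omega> k) * ?m (\<omega> k)) \<le> (\<Prod>k\<in>{1..n}. 1 - eps)"
          by (rule prod_mono) (use om H_pos h_pos Mh_pos Hh_bound in \<open>auto intro!: mult_nonneg_nonneg less_imp_le\<close>)
        have p0: "0 \<le> (\<Prod>k\<in>{1..n}. H (\<omega> k) * h (\<omega> k) * ?m (\<omega> k))"
          by (rule prod_nonneg) (use om H_pos h_pos Mh_pos in \<open>auto intro!: mult_nonneg_nonneg less_imp_le\<close>)
        have "?g \<omega> \<le> kappa * (1 - eps) ^ n"
          using mult_mono[OF r p] p0 kappa by simp
        moreover have "0 \<le> ?g \<omega>" using m0 p0 by simp
        ultimately show ?thesis by simp
      qed
      have gm: "?g \<in> borel_measurable (chain_path E ?K n y)"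
      proof -
        have "?g \<in> borel_measurable (PiM {0..n} (\<lambda>_. E))"
          apply (intro borel_measurable_times borel_measurable_divide borel_measurable_prod)
          using H_meas h_meas mm by (auto intro!: comp)
        then show ?thesis using sK by (simp cong: measurable_cong_sets)
      qed
      have int: "integrable (chain_path E ?K n y) ?g"
      proof (rule finite_measure.integrable_const_bound[where B="kappa * (1 - eps) ^ n"])
        show "finite_measure (chain_path E ?K n y)" using PS by (simp add: prob_space_def)
        show "AE \<omega> in chain_path E ?K n y. norm (?g \<omega>) \<le> kappa * (1 - eps) ^ n"
        proof (rule AE_I2)
          fix \<omega> assume "\<omega> \<in> space (chain_path E ?K n y)"
          then have "0 \<le> ?g \<omega> \<and> ?g \<omega> \<le> kappa * (1 - eps) ^ n" by (rule bnd)
          then show "norm (?g \<omega>) \<le> kappa * (1 - eps) ^ n" by (metis abs_of_nonneg real_norm_def)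
        qed
        show "?g \<in> borel_measurable (chain_path E ?K n y)" by (rule gm)
      qed
      have "(\<integral>\<omega>. ?g \<omega> \<partial>chain_path E ?K n y) \<le> kappa * (1 - eps) ^ n"
        by (rule prob_space.integral_le_const[OF PS int]) (rule AE_I2, use bnd in auto)
      then show "(\<integral>\<omega>. (\<Prod>k\<in>{1..n}. H (\<omega> k)) \<partial>chain_path E M n y) \<le> kappa * (1 - eps) ^ n"
        using eq by simp
    qed
  qed
qed

end
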